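(* For terms $L,M$ of the CCV $\lambda\mu$-calculus, if $L=_{ccv}M$ then $[\![L]\!]=[\![M]\!]$ with respect to $\beta\eta$-equality of the $\lambda$-calculus.
   Context: CCV $\lambda\mu$-calculus. Ordinary variables $x,y,z,\dots$ and continuation variables $k,l,\dots$ are disjoint. Terms $M ::= x \mid \lambda x.M \mid MM \mid (M\ \mathsf{where}\ x:=M) \mid \mu k.J$, jumps $J ::= [k]M \mid (J\ \mathsf{where}\ x:=M)$, where $(L\ \mathsf{where}\ x:=M)$ means $\mathsf{let}\ x=M\ \mathsf{in}\ L$ ($x$ bound in $L$ only). Terms are identified up to $\alpha$-conversion and the congruence generated by (E1) $(L\ \mathsf{where}\ x:=(M\ \mathsf{where}\ y:=N))=((L\ \mathsf{where}\ x:=M)\ \mathsf{where}\ y:=N)$ if $y$ not free in $L$; (E2) $((\mu k.J)\ \mathsf{where}\ x:=M)=\mu k.(J\ \mathsf{where}\ x:=M)$ if $k$ not free in $M$; (E3) $[k](L\ \mathsf{where}\ x:=M)=([k]L\ \mathsf{where}\ x:=M)$. Values $V$: variables and $\lambda$-abstractions; $N$ a non-value. $=_{ccv}$ is the smallest congruence containing ($z$ fresh): $NM\to(zM\ \mathsf{where}\ z:=N)$; $VN\to(Vz\ \mathsf{where}\ z:=N)$; $(\lambda x.M)V\to(M\ \mathsf{where}\ x:=V)$; $(M\ \mathsf{where}\ x:=V)\to M\{V/x\}$; $(M\ \mathsf{where}\ x:=\mu k.J)\to\mu k.J\{[k]\square\mapsto[k](M\ \mathsf{where}\ x:=\square)\}$;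 $[l]\mu k.J\to J\{l/k\}$; $\lambda x.Vx\to V$ ($x$ not free in $V$); $(x\ \mathsf{where}\ x:=M)\to M$; $\mu k.[k]M\to M$ ($k$ not free in $M$); the context substitution replaces recursively each subjump $[k]Q$ with $k$ free by $[k](M\ \mathsf{where}\ x:=Q)$, and $J\{l/k\}$ replaces each such $[k]Q$ by $[l]Q$. CPS translation into the $\lambda$-calculus (fresh bound variables, $K$ a $\lambda$-term): $\langle V\rangle[K]=KV^*$; $\langle V_1V_2\rangle[K]=V_1^*V_2^*K$; $\langle VN\rangle[K]=\langle N\rangle[\lambda y.V^*yK]$; $\langle NV\rangle[K]=\langle N\rangle[\lambda x.xV^*K]$; $\langle N_1N_2\rangle[K]=\langle N_1\rangle[\lambda x.\langle N_2\rangle[\lambda y.xyK]]$; $\langle (L\ \mathsf{where}\ x:=M)\rangle[K]=\langle M\rangle[\lambda x.\langle L\rangle[K]]$ (renaming $x$ if free in $K$); $\langle\mu k.J\rangle[K]=(\lambda k.\langle J\rangle)K$; $\langle[k]M\rangle=\langle M\rangle[k]$; $\langle (J\ \mathsf{where}\ x:=M)\rangle=\langle M\rangle[\lambda x.\langle J\rangle]$; $x^*=x$; $(\lambda x.M)^*=\lambda xk.\langle M\rangle[k]$; $[\![M]\!]=\lambda k.\langle M\rangle[k]$, computed from any syntax-tree representative. *)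

theory Defs
  imports Main
begin

text \<open>Ordinary variables are de Bruijn indices counting only ordinary binders
(Lam and the body of a where); continuation variables are de Bruijn indices
counting only mu-binders.  Where L M stands for (L where x:=M), with x bound
(index 0) in L only; Mu J binds continuation index 0 in J.\<close>

datatype trm = Var nat | Lam trm | App trm trm | Where trm trm | Mu jmp
     and jmp = Jump nat trm | JWhere jmp trm

fun is_val :: "trm \<Rightarrow> bool" where
  "is_val (Var _) = True"
| "is_val (Lam _) = True"
| "is_val _ = False"

primrec lift_t :: "nat \<Rightarrow> trm \<Rightarrow> trm" and lift_j :: "nat \<Rightarrow> jmp \<Rightarrow> jmp" where
  "lift_t c (Var i) = Var (if i < c then i else Suc i)"
| "lift_t c (Lam M) = Lam (lift_t (Suc c) M)"
| "lift_t c (App M N) = App (lift_t c M) (lift_t c N)"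
| "lift_t c (Where L M) = Where (lift_t (Suc c) L) (lift_t c M)"
| "lift_t c (Mu J) = Mu (lift_j c J)"
| "lift_j c (Jump k M) = Jump k (lift_t c M)"
| "lift_j c (JWhere J M) = JWhere (lift_j (Suc c) J) (lift_t c M)"

primrec klift_t :: "nat \<Rightarrow> trm \<Rightarrow> trm" and klift_j :: "nat \<Rightarrow> jmp \<Rightarrow> jmp" where
  "klift_t c (Var i) = Var i"
| "klift_t c (Lam M) = Lam (klift_t c M)"
| "klift_t c (App M N) = App (klift_t c M) (klift_t c N)"
| "klift_t c (Where L M) = Where (klift_t c L) (klift_t c M)"
| "klift_t c (Mu J) = Mu (klift_j (Suc c) J)"
| "klift_j c (Jump k M) = Jump (if k < c then k else Suc k) (klift_t c M)"
| "klift_j c (JWhere J M) = JWhere (klift_j c J) (klift_t c M)"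

primrec subst_t :: "nat \<Rightarrow> trm \<Rightarrow> trm \<Rightarrow> trm" and subst_j :: "nat \<Rightarrow> trm \<Rightarrow> jmp \<Rightarrow> jmp" where
  "subst_t n V (Var i) = (if i = n then V else if n < i then Var (i - 1) else Var i)"
| "subst_t n V (Lam M) = Lam (subst_t (Suc n) (lift_t 0 V) M)"
| "subst_t n V (App M N) = App (subst_t n V M) (subst_t n V N)"
| "subst_t n V (Where L M) = Where (subst_t (Suc n) (lift_t 0 V) L) (subst_t n V M)"
| "subst_t n V (Mu J) = Mu (subst_j n (klift_t 0 V) J)"
| "subst_j n V (Jump k M) = Jump k (subst_t n V M)"
| "subst_j n V (JWhere J M) = JWhere (subst_j (Suc n) (lift_t 0 V) J) (subst_t n V M)"

text \<open>Continuation renaming: replace continuation index n by m (m given in the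
numbering after removal of the binder of n), decrementing indices above n.
\<open>krename_j 0 l J\<close> is \<open>J{l/k}\<close> for \<open>\<mu>k.J\<close>.\<close>
primrec krename_t :: "nat \<Rightarrow> nat \<Rightarrow> trm \<Rightarrow> trm" and krename_j :: "nat \<Rightarrow> nat \<Rightarrow> jmp \<Rightarrow> jmp" where
  "krename_t n m (Var i) = Var i"
| "krename_t n m (Lam M) = Lam (krename_t n m M)"
| "krename_t n m (App M N) = App (krename_t n m M) (krename_t n m N)"
| "krename_t n m (Where L M) = Where (krename_t n m L) (krename_t n m M)"
| "krename_t n m (Mu J) = Mu (krename_j (Suc n) (Suc m) J)"
| "krename_j n m (Jump k M) =
     Jump (if k = n then m else if n < k then k - 1 else k) (krename_t n m M)"
| "krename_j n m (JWhere J M) = JWhere (krename_j n m J) (krename_t n m M)"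

text \<open>Context substitution \<open>J{[k]\<box> \<mapsto> [k](M where x:=\<box>)}\<close>: n is the index of k,
C is M with its ordinary index 0 being x (bound by the inserted where) and
adapted to the current context.\<close>
primrec ctx_t :: "nat \<Rightarrow> trm \<Rightarrow> trm \<Rightarrow> trm" and ctx_j :: "nat \<Rightarrow> trm \<Rightarrow> jmp \<Rightarrow> jmp" where
  "ctx_t n C (Var i) = Var i"
| "ctx_t n C (Lam P) = Lam (ctx_t n (lift_t 1 C) P)"
| "ctx_t n C (App P Q) = App (ctx_t n C P) (ctx_t n C Q)"
| "ctx_t n C (Where L P) = Where (ctx_t n (lift_t 1 C) L) (ctx_t n C P)"
| "ctx_t n C (Mu J) = Mu (ctx_j (Suc n) (klift_t 0 C) J)"
| "ctx_j n C (Jump k Q) =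
     (if k = n then Jump k (Where C (ctx_t n C Q)) else Jump k (ctx_t n C Q))"
| "ctx_j n C (JWhere J P) = JWhere (ctx_j n (lift_t 1 C) J) (ctx_t n C P)"

text \<open>\<open>=\<^sub>c\<^sub>c\<^sub>v\<close>: the smallest congruence containing the ccv rules; the
identifications E1--E3 of the calculus are included as generating equations,
so that this relation on raw terms coincides with \<open>=\<^sub>c\<^sub>c\<^sub>v\<close> on E-classes.\<close>
inductive ccv_t :: "trm \<Rightarrow> trm \<Rightarrow> bool" and ccv_j :: "jmp \<Rightarrow> jmp \<Rightarrow> bool" where
  refl_t: "ccv_t M M"
| sym_t: "ccv_t M N \<Longrightarrow> ccv_t N M"
| trans_t: "ccv_t M N \<Longrightarrow> ccv_t N P \<Longrightarrow> ccv_t M P"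
| refl_j: "ccv_j J J"
| sym_j: "ccv_j J J' \<Longrightarrow> ccv_j J' J"
| trans_j: "ccv_j J J' \<Longrightarrow> ccv_j J' J'' \<Longrightarrow> ccv_j J J''"
| lam: "ccv_t M M' \<Longrightarrow> ccv_t (Lam M) (Lam M')"
| app: "ccv_t M M' \<Longrightarrow> ccv_t N N' \<Longrightarrow> ccv_t (App M N) (App M' N')"
| wher: "ccv_t L L' \<Longrightarrow> ccv_t M M' \<Longrightarrow> ccv_t (Where L M) (Where L' M')"
| mu: "ccv_j J J' \<Longrightarrow> ccv_t (Mu J) (Mu J')"
| jump: "ccv_t M M' \<Longrightarrow> ccv_j (Jump k M) (Jump k M')"
| jwhere: "ccv_j J J' \<Longrightarrow> ccv_t M M' \<Longrightarrow> ccv_j (JWhere J M) (JWhere J' M')"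
| E1_t: "ccv_t (Where L (Where M N)) (Where (Where (lift_t 1 L) M) N)"
| E1_j: "ccv_j (JWhere J (Where M N)) (JWhere (JWhere (lift_j 1 J) M) N)"
| E2: "ccv_t (Where (Mu J) M) (Mu (JWhere J (klift_t 0 M)))"
| E3: "ccv_j (Jump k (Where L M)) (JWhere (Jump k L) M)"
| r_nm: "\<not> is_val N \<Longrightarrow> ccv_t (App N M) (Where (App (Var 0) (lift_t 0 M)) N)"
| r_vn: "is_val V \<Longrightarrow> \<not> is_val N \<Longrightarrow> ccv_t (App V N) (Where (App (lift_t 0 V) (Var 0)) N)"
| r_beta: "is_val V \<Longrightarrow> ccv_t (App (Lam M) V) (Where M V)"
| r_subst: "is_val V \<Longrightarrow> ccv_t (Where M V) (subst_t 0 V M)"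
| r_mu: "ccv_t (Where M (Mu J)) (Mu (ctx_j 0 (klift_t 0 M) J))"
| r_ren: "ccv_j (Jump l (Mu J)) (krename_j 0 l J)"
| r_eta: "is_val V \<Longrightarrow> ccv_t (Lam (App (lift_t 0 V) (Var 0))) V"
| r_where_var: "ccv_t (Where (Var 0) M) M"
| r_mu_eta: "ccv_t (Mu (Jump 0 (klift_t 0 M))) M"

datatype lterm = LVar nat | LAbs lterm | LApp lterm lterm

primrec lshift :: "nat \<Rightarrow> lterm \<Rightarrow> lterm" where
  "lshift c (LVar i) = LVar (if i < c then i else Suc i)"
| "lshift c (LAbs t) = LAbs (lshift (Suc c) t)"
| "lshift c (LApp t u) = LApp (lshift c t) (lshift c u)"

primrec lsubst :: "nat \<Rightarrow> lterm \<Rightarrow> lterm \<Rightarrow> lterm" where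
  "lsubst n s (LVar i) = (if i = n then s else if n < i then LVar (i - 1) else LVar i)"
| "lsubst n s (LAbs t) = LAbs (lsubst (Suc n) (lshift 0 s) t)"
| "lsubst n s (LApp t u) = LApp (lsubst n s t) (lsubst n s u)"

inductive bn_eq :: "lterm \<Rightarrow> lterm \<Rightarrow> bool" where
  bn_refl: "bn_eq t t"
| bn_sym: "bn_eq t u \<Longrightarrow> bn_eq u t"
| bn_trans: "bn_eq t u \<Longrightarrow> bn_eq u v \<Longrightarrow> bn_eq t v"
| bn_abs: "bn_eq t t' \<Longrightarrow> bn_eq (LAbs t) (LAbs t')"
| bn_app: "bn_eq t t' \<Longrightarrow> bn_eq u u' \<Longrightarrow> bn_eq (LApp t u) (LApp t' u')"
| bn_beta: "bn_eq (LApp (LAbs t) s) (lsubst 0 s t)"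
| bn_eta: "bn_eq (LAbs (LApp (lshift 0 t) (LVar 0))) t"

text \<open>\<open>\<rho>\<close> maps ordinary indices, \<open>\<kappa>\<close> continuation indices, to target indices.\<close>

definition ext :: "(nat \<Rightarrow> nat) \<Rightarrow> nat \<Rightarrow> nat" where
  "ext \<rho> = case_nat 0 (\<lambda>i. Suc (\<rho> i))"

definition up :: "(nat \<Rightarrow> nat) \<Rightarrow> nat \<Rightarrow> nat" where
  "up \<rho> = (\<lambda>i. Suc (\<rho> i))"

fun vstar :: "(nat \<Rightarrow> nat) \<Rightarrow> (nat \<Rightarrow> nat) \<Rightarrow> trm \<Rightarrow> lterm"
and cps_t :: "(nat \<Rightarrow> nat) \<Rightarrow> (nat \<Rightarrow> nat) \<Rightarrow> trm \<Rightarrow> lterm \<Rightarrow> lterm"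
and cps_j :: "(nat \<Rightarrow> nat) \<Rightarrow> (nat \<Rightarrow> nat) \<Rightarrow> jmp \<Rightarrow> lterm" where
  "vstar \<rho> \<kappa> (Var i) = LVar (\<rho> i)"
| "vstar \<rho> \<kappa> (Lam M) = LAbs (LAbs (cps_t (up (ext \<rho>)) (up (up \<kappa>)) M (LVar 0)))"
| "vstar \<rho> \<kappa> (App M N) = undefined"
| "vstar \<rho> \<kappa> (Where M N) = undefined"
| "vstar \<rho> \<kappa> (Mu J) = undefined"
| "cps_t \<rho> \<kappa> (Var i) K = LApp K (LVar (\<rho> i))"
| "cps_t \<rho> \<kappa> (Lam M) K =
     LApp K (LAbs (LAbs (cps_t (up (ext \<rho>)) (up (up \<kappa>)) M (LVar 0))))"
| "cps_t \<rho> \<kappa> (App M N) K =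
     (if is_val M \<and> is_val N then LApp (LApp (vstar \<rho> \<kappa> M) (vstar \<rho> \<kappa> N)) K
      else if is_val M then
        cps_t \<rho> \<kappa> N (LAbs (LApp (LApp (lshift 0 (vstar \<rho> \<kappa> M)) (LVar 0)) (lshift 0 K)))
      else if is_val N then
        cps_t \<rho> \<kappa> M (LAbs (LApp (LApp (LVar 0) (lshift 0 (vstar \<rho> \<kappa> N))) (lshift 0 K)))
      else
        cps_t \<rho> \<kappa> M (LAbs (cps_t (up \<rho>) (up \<kappa>) N
           (LAbs (LApp (LApp (LVar 1) (LVar 0)) (lshift 0 (lshift 0 K)))))))"
| "cps_t \<rho> \<kappa> (Where L M) K = cps_t \<rho> \<kappa> M (LAbs (cps_t (ext \<rho>) (up \<kappa>) L (lshift 0 K)))"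
| "cps_t \<rho> \<kappa> (Mu J) K = LApp (LAbs (cps_j (up \<rho>) (ext \<kappa>) J)) K"
| "cps_j \<rho> \<kappa> (Jump k M) = cps_t \<rho> \<kappa> M (LVar (\<kappa> k))"
| "cps_j \<rho> \<kappa> (JWhere J M) = cps_t \<rho> \<kappa> M (LAbs (cps_j (ext \<rho>) (up \<kappa>) J))"

text \<open>\<open>[[M]] = \<lambda>k.\<langle>M\<rangle>[k]\<close>; free ordinary variable i and free continuation
variable j of M are sent to the distinct target free variables 2i and 2j+1.\<close>
definition cps :: "trm \<Rightarrow> lterm" where
  "cps M = LAbs (cps_t (\<lambda>i. Suc (2 * i)) (\<lambda>j. Suc (2 * j + 1)) M (LVar 0))"

end

theory Submission
  imports Defs
begin

definition scons :: "lterm \<Rightarrow> (nat \<Rightarrow> lterm) \<Rightarrow> nat \<Rightarrow> lterm" where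
  "scons a R i = (case i of 0 \<Rightarrow> a | Suc j \<Rightarrow> R j)"
lemma scons_0[simp]: "scons a R 0 = a" and scons_Suc[simp]: "scons a R (Suc j) = R j"
  and scons_1[simp]: "scons a R 1 = R 0"
  by (simp_all add: scons_def)

definition upr :: "(nat \<Rightarrow> nat) \<Rightarrow> nat \<Rightarrow> nat" where
  "upr f i = (case i of 0 \<Rightarrow> 0 | Suc j \<Rightarrow> Suc (f j))"
lemma upr_0[simp]: "upr f 0 = 0" and upr_Suc[simp]: "upr f (Suc j) = Suc (f j)"
  by (simp_all add: upr_def)

primrec lren :: "(nat \<Rightarrow> nat) \<Rightarrow> lterm \<Rightarrow> lterm" where
  "lren f (LVar i) = LVar (f i)"
| "lren f (LAbs t) = LAbs (lren (upr f) t)"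
| "lren f (LApp t u) = LApp (lren f t) (lren f u)"

definition ups :: "(nat \<Rightarrow> lterm) \<Rightarrow> nat \<Rightarrow> lterm" where
  "ups \<sigma> = scons (LVar 0) (\<lambda>i. lren Suc (\<sigma> i))"

lemma ups_0[simp]: "ups \<sigma> 0 = LVar 0" and ups_Suc[simp]: "ups \<sigma> (Suc i) = lren Suc (\<sigma> i)"
  by (simp_all add: ups_def)

primrec lsub :: "(nat \<Rightarrow> lterm) \<Rightarrow> lterm \<Rightarrow> lterm" where
  "lsub \<sigma> (LVar i) = \<sigma> i"
| "lsub \<sigma> (LAbs t) = LAbs (lsub (ups \<sigma>) t)"
| "lsub \<sigma> (LApp t u) = LApp (lsub \<sigma> t) (lsub \<sigma> u)"

lemma ren_ren: "lren f (lren g t) = lren (\<lambda>i. f (g i)) t"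
proof (induction t arbitrary: f g)
  case (LAbs t)
  have "(\<lambda>i. upr f (upr g i)) = upr (\<lambda>i. f (g i))"
    by (auto simp: fun_eq_iff upr_def split: nat.split)
  then show ?case using LAbs by simp
qed simp_all

lemma ren_sub: "lren f (lsub \<sigma> t) = lsub (\<lambda>i. lren f (\<sigma> i)) t"
proof (induction t arbitrary: f \<sigma>)
  case (LAbs t)
  have "(\<lambda>i. lren (upr f) (ups \<sigma> i)) = ups (\<lambda>i. lren f (\<sigma> i))"
    by (auto simp: fun_eq_iff ups_def scons_def ren_ren split: nat.split)
  then show ?case using LAbs by simp
qed simp_all

lemma sub_ren: "lsub \<sigma> (lren f t) = lsub (\<lambda>i. \<sigma> (f i)) t"
proof (induction t arbitrary: f \<sigma>)
  case (LAbs t)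
  have "(\<lambda>i. ups \<sigma> (upr f i)) = ups (\<lambda>i. \<sigma> (f i))"
    by (auto simp: fun_eq_iff ups_def scons_def upr_def split: nat.split)
  then show ?case using LAbs by simp
qed simp_all

lemma sub_sub: "lsub \<sigma> (lsub \<tau> t) = lsub (\<lambda>i. lsub \<sigma> (\<tau> i)) t"
proof (induction t arbitrary: \<sigma> \<tau>)
  case (LAbs t)
  have "(\<lambda>i. lsub (ups \<sigma>) (ups \<tau> i)) = ups (\<lambda>i. lsub \<sigma> (\<tau> i))"
    by (auto simp: fun_eq_iff ups_def scons_def sub_ren ren_sub split: nat.split)
  then show ?case using LAbs by simp
qed simp_all

lemma sub_id: "lsub LVar t = t"
proof (induction t)
  case (LAbs t)
  have "ups LVar = LVar" by (auto simp: fun_eq_iff ups_def scons_def split: nat.split)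
  then show ?case using LAbs by simp
qed simp_all

lemma ren_as_sub: "lren f t = lsub (\<lambda>i. LVar (f i)) t"
proof (induction t arbitrary: f)
  case (LAbs t)
  have "(\<lambda>i. LVar (upr f i)) = ups (\<lambda>i. LVar (f i))"
    by (auto simp: fun_eq_iff ups_def scons_def upr_def split: nat.split)
  then show ?case using LAbs by simp
qed simp_all

lemma lshift_ren: "lshift c t = lren (\<lambda>i. if i < c then i else Suc i) t"
proof (induction t arbitrary: c)
  case (LAbs t)
  have "upr (\<lambda>i. if i < c then i else Suc i) = (\<lambda>i. if i < Suc c then i else Suc i)"
    by (auto simp: fun_eq_iff upr_def split: nat.split)
  then show ?case using LAbs by simp
qed simp_all

lemma lshift0: "lshift 0 t = lren Suc t"
  by (simp add: lshift_ren)

lemma lsubst_sub: "lsubst n s t = lsub (\<lambda>i. if i = n then s else if n < i then LVar (i - 1) else LVar i) t"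
proof (induction t arbitrary: n s)
  case (LAbs t)
  have "ups (\<lambda>i. if i = n then s else if n < i then LVar (i - 1) else LVar i)
     = (\<lambda>i. if i = Suc n then lshift 0 s else if Suc n < i then LVar (i - 1) else LVar i)"
    by (auto simp: fun_eq_iff ups_def scons_def lshift0 split: nat.split)
  then show ?case using LAbs by simp
qed simp_all

lemma lsubst0: "lsubst 0 s t = lsub (scons s LVar) t"
proof -
  have "(\<lambda>i. if i = 0 then s else if 0 < i then LVar (i - 1) else LVar i) = scons s LVar"
    by (auto simp: fun_eq_iff scons_def split: nat.split)
  then show ?thesis by (simp add: lsubst_sub)
qed

lemma bn_lsub: "bn_eq t u \<Longrightarrow> bn_eq (lsub \<sigma> t) (lsub \<sigma> u)"
proof (induction arbitrary: \<sigma> rule: bn_eq.induct)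
  case (bn_beta t s)
  have "(\<lambda>i. lsub (scons (lsub \<sigma> s) LVar) (ups \<sigma> i)) = (\<lambda>i. lsub \<sigma> (scons s LVar i))"
    by (auto simp: fun_eq_iff ups_def scons_def sub_ren sub_id split: nat.split)
  then have "lsub \<sigma> (lsubst 0 s t) = lsubst 0 (lsub \<sigma> s) (lsub (ups \<sigma>) t)"
    by (simp add: lsubst0 sub_sub)
  then show ?case by (simp add: bn_eq.bn_beta)
next
  case (bn_eta t)
  have "lsub (ups \<sigma>) (lshift 0 t) = lshift 0 (lsub \<sigma> t)"
    by (simp add: lshift0 sub_ren ren_sub ups_def)
  then show ?case by (simp add: bn_eq.bn_eta)
qed (auto intro: bn_eq.intros)


lemma ups_1[simp]: "ups \<sigma> 1 = lren Suc (\<sigma> 0)" by (simp add: ups_def)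

lemma lsub_ups_sh[simp]: "lsub (ups \<sigma>) (lshift 0 t) = lshift 0 (lsub \<sigma> t)"
  by (simp add: lshift0 sub_ren ren_sub ups_def)

lemma lsub_scons_sh[simp]: "lsub (scons s \<sigma>) (lshift 0 t) = lsub \<sigma> t"
  by (simp add: lshift0 sub_ren)

definition shE :: "(nat \<Rightarrow> lterm) \<Rightarrow> nat \<Rightarrow> lterm" where
  "shE R i = lshift 0 (R i)"
definition mapE :: "(nat \<Rightarrow> lterm) \<Rightarrow> (nat \<Rightarrow> lterm) \<Rightarrow> nat \<Rightarrow> lterm" where
  "mapE \<sigma> R i = lsub \<sigma> (R i)"
lemma shE_apply[simp]: "shE R i = lshift 0 (R i)" by (simp add: shE_def)
lemma mapE_apply[simp]: "mapE \<sigma> R i = lsub \<sigma> (R i)" by (simp add: mapE_def)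

lemma mapE_scons[simp]: "mapE \<sigma> (scons a R) = scons (lsub \<sigma> a) (mapE \<sigma> R)"
  by (auto simp: fun_eq_iff scons_def split: nat.split)
lemma mapE_ups_shE[simp]: "mapE (ups \<sigma>) (shE R) = shE (mapE \<sigma> R)"
  by (auto simp: fun_eq_iff)
lemma mapE_scons_shE[simp]: "mapE (scons s \<sigma>) (shE R) = mapE \<sigma> R"
  by (auto simp: fun_eq_iff)
lemma mapE_id[simp]: "mapE LVar R = R"
  by (auto simp: fun_eq_iff sub_id)
lemma lsub_id[simp]: "lsub LVar t = t" by (rule sub_id)
lemma shE_scons[simp]: "shE (scons a R) = scons (lshift 0 a) (shE R)"
  by (auto simp: fun_eq_iff scons_def split: nat.split)

primrec gt :: "(nat \<Rightarrow> lterm) \<Rightarrow> (nat \<Rightarrow> lterm) \<Rightarrow> trm \<Rightarrow> lterm \<Rightarrow> lterm"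
and gj :: "(nat \<Rightarrow> lterm) \<Rightarrow> (nat \<Rightarrow> lterm) \<Rightarrow> jmp \<Rightarrow> lterm" where
  "gt R Kp (Var i) K = LApp K (R i)"
| "gt R Kp (Lam M) K = LApp K (LAbs (LAbs (gt (scons (LVar 1) (shE (shE R))) (shE (shE Kp)) M (LVar 0))))"
| "gt R Kp (App M N) K = gt R Kp M (LAbs (gt (shE R) (shE Kp) N
      (LAbs (LApp (LApp (LVar 1) (LVar 0)) (lshift 0 (lshift 0 K))))))"
| "gt R Kp (Where L M) K = gt R Kp M (LAbs (gt (scons (LVar 0) (shE R)) (shE Kp) L (lshift 0 K)))"
| "gt R Kp (Mu J) K = LApp (LAbs (gj (shE R) (scons (LVar 0) (shE Kp)) J)) K"
| "gj R Kp (Jump k M) = gt R Kp M (Kp k)"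
| "gj R Kp (JWhere J M) = gt R Kp M (LAbs (gj (scons (LVar 0) (shE R)) (shE Kp) J))"

fun gval :: "(nat \<Rightarrow> lterm) \<Rightarrow> (nat \<Rightarrow> lterm) \<Rightarrow> trm \<Rightarrow> lterm" where
  "gval R Kp (Var i) = R i"
| "gval R Kp (Lam M) = LAbs (LAbs (gt (scons (LVar 1) (shE (shE R))) (shE (shE Kp)) M (LVar 0)))"
| "gval R Kp _ = LVar 0"

lemma gt_val: "is_val V \<Longrightarrow> gt R Kp V K = LApp K (gval R Kp V)"
  by (cases V) auto

lemma lsub_gt:
  "lsub \<sigma> (gt R Kp M K) = gt (mapE \<sigma> R) (mapE \<sigma> Kp) M (lsub \<sigma> K)"
  "lsub \<sigma> (gj R Kp J) = gj (mapE \<sigma> R) (mapE \<sigma> Kp) J"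
  by (induction M and J arbitrary: \<sigma> R Kp K and \<sigma> R Kp) auto


lemma lsub_gval: "is_val V \<Longrightarrow> lsub \<sigma> (gval R Kp V) = gval (mapE \<sigma> R) (mapE \<sigma> Kp) V"
  by (cases V) (auto simp: lsub_gt)

definition shc :: "nat \<Rightarrow> nat \<Rightarrow> lterm" where
  "shc c i = LVar (if i < c then i else Suc i)"

lemma lshift_shc: "lshift c t = lsub (shc c) t"
  unfolding lshift_ren ren_as_sub shc_def by simp

lemma shc_Suc: "shc (Suc c) = ups (shc c)"
  by (auto simp: fun_eq_iff shc_def ups_def scons_def split: nat.split)

lemma lsub_shc0[simp]: "lsub (shc 0) t = lshift 0 t"
  by (simp add: lshift_shc)
lemma mapE_shc0[simp]: "mapE (shc 0) R = shE R"
  by (simp add: fun_eq_iff)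
lemma lshift_Suc_sub[simp]: "lshift (Suc c) t = lsub (ups (shc c)) t"
  by (simp add: lshift_shc shc_Suc)
lemma lshift_1_sub[simp]: "lshift 1 t = lsub (ups (shc 0)) t"
  using lshift_Suc_sub[of 0] by simp

lemma sh_gt: "lshift 0 (gt R Kp M K) = gt (shE R) (shE Kp) M (lshift 0 K)"
  using lsub_gt(1)[of "shc 0"] by simp
lemma sh_gj: "lshift 0 (gj R Kp J) = gj (shE R) (shE Kp) J"
  using lsub_gt(2)[of "shc 0"] by simp
lemma sh_gval: "is_val V \<Longrightarrow> lshift 0 (gval R Kp V) = gval (shE R) (shE Kp) V"
  using lsub_gval[of V "shc 0"] by simp

lemma bn_sh: "bn_eq t u \<Longrightarrow> bn_eq (lshift 0 t) (lshift 0 u)"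
  using bn_lsub[of t u "shc 0"] by simp

lemma gt_Kcompat: "bn_eq K K' \<Longrightarrow> bn_eq (gt R Kp M K) (gt R Kp M K')"
proof (induction M arbitrary: R Kp K K')
  case (App M N)
  have "bn_eq (LAbs (LApp (LApp (LVar 1) (LVar 0)) (lshift 0 (lshift 0 K))))
               (LAbs (LApp (LApp (LVar 1) (LVar 0)) (lshift 0 (lshift 0 K'))))"
    using App.prems by (intro bn_abs bn_app bn_refl bn_sh)
  then show ?case using App.IH by (simp add: bn_abs)
next
  case (Where L M)
  then show ?case by (simp add: bn_abs bn_sh)
qed (auto intro!: bn_app bn_abs bn_refl)

definition skE :: "nat \<Rightarrow> (nat \<Rightarrow> lterm) \<Rightarrow> nat \<Rightarrow> lterm" where
  "skE c R i = R (if i < c then i else Suc i)"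
definition sbE :: "nat \<Rightarrow> lterm \<Rightarrow> (nat \<Rightarrow> lterm) \<Rightarrow> nat \<Rightarrow> lterm" where
  "sbE n v R i = (if i = n then v else if n < i then R (i - 1) else R i)"
lemma skE_apply[simp]: "skE c R i = R (if i < c then i else Suc i)" by (simp add: skE_def)

lemma skE_Suc_scons[simp]: "skE (Suc c) (scons a R) = scons a (skE c R)"
  by (auto simp: fun_eq_iff scons_def split: nat.split)
lemma skE_1_scons[simp]: "skE 1 (scons a R) = scons a (skE 0 R)"
  by (auto simp: fun_eq_iff scons_def split: nat.split)
lemma skE_0_scons[simp]: "skE 0 (scons a R) = R"
  by (auto simp: fun_eq_iff scons_def split: nat.split)
lemma skE_shE[simp]: "skE c (shE R) = shE (skE c R)"
  by (auto simp: fun_eq_iff)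

lemma sbE_Suc_scons[simp]: "sbE (Suc n) v (scons a R) = scons a (sbE n v R)"
  by (auto simp: fun_eq_iff scons_def sbE_def split: nat.split)
lemma sbE_0[simp]: "sbE 0 v R = scons v R"
  by (auto simp: fun_eq_iff scons_def sbE_def split: nat.split)
lemma sbE_shE[simp]: "sbE n (lshift 0 v) (shE R) = shE (sbE n v R)"
  by (auto simp: fun_eq_iff sbE_def)

lemma gt_lift:
  "gt R Kp (lift_t c M) K = gt (skE c R) Kp M K"
  "gj R Kp (lift_j c J) = gj (skE c R) Kp J"
  by (induction M and J arbitrary: c R Kp K and c R Kp) auto

lemma gt_klift:
  "gt R Kp (klift_t c M) K = gt R (skE c Kp) M K"
  "gj R Kp (klift_j c J) = gj R (skE c Kp) J"
  by (induction M and J arbitrary: c R Kp K and c R Kp) auto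

lemma gval_lift: "gval R Kp (lift_t c V) = gval (skE c R) Kp V"
  by (cases V) (auto simp: gt_lift)
lemma gval_klift: "gval R Kp (klift_t c V) = gval R (skE c Kp) V"
  by (cases V) (auto simp: gt_klift)
lemma isv_lift[simp]: "is_val (lift_t c V) = is_val V" by (cases V) auto
lemma isv_klift[simp]: "is_val (klift_t c V) = is_val V" by (cases V) auto


lemma gval_shE: "is_val V \<Longrightarrow> gval (shE R) (shE Kp) V = lshift 0 (gval R Kp V)"
  by (simp add: sh_gval)

lemma gt_subst:
  "is_val V \<Longrightarrow> gt R Kp (subst_t n V M) K = gt (sbE n (gval R Kp V) R) Kp M K"
  "is_val V \<Longrightarrow> gj R Kp (subst_j n V J) = gj (sbE n (gval R Kp V) R) Kp J"
  by (induction M and J arbitrary: n V R Kp K and n V R Kp)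
     (auto simp: gt_val gval_lift gval_klift gval_shE sbE_def)

lemma gt_krename:
  "gt R Kp (krename_t n m M) K = gt R (sbE n (Kp m) Kp) M K"
  "gj R Kp (krename_j n m J) = gj R (sbE n (Kp m) Kp) J"
  by (induction M and J arbitrary: n m R Kp K and n m R Kp) (auto simp: sbE_def)

definition phi :: "(nat \<Rightarrow> lterm) \<Rightarrow> (nat \<Rightarrow> lterm) \<Rightarrow> trm \<Rightarrow> nat \<Rightarrow> lterm" where
  "phi R Kp C n = LAbs (gt (scons (LVar 0) (shE R)) (shE Kp) C (lshift 0 (Kp n)))"

lemma shE_upd[simp]: "shE (f(n := v)) = (shE f)(n := lshift 0 v)"
  by (auto simp: fun_eq_iff)
lemma scons_upd[simp]: "scons a (f(n := v)) = (scons a f)(Suc n := v)"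
  by (auto simp: fun_eq_iff scons_def split: nat.split)

lemma gt_ctx:
  "gt R Kp (ctx_t n C P) K = gt R (Kp(n := phi R Kp C n)) P K"
  "gj R Kp (ctx_j n C J) = gj R (Kp(n := phi R Kp C n)) J"
  by (induction P and J arbitrary: n C R Kp K and n C R Kp) (auto simp: phi_def gt_lift gt_klift lsub_gt)


lemma lren_Suc[simp]: "lren Suc t = lshift 0 t" by (simp add: lshift0)
lemma mapE_upd[simp]: "mapE \<sigma> (f(n := v)) = (mapE \<sigma> f)(n := lsub \<sigma> v)"
  by (auto simp: fun_eq_iff)
lemma scons_upd0[simp]: "(scons a f)(0 := b) = scons b f"
  by (auto simp: fun_eq_iff scons_def split: nat.split)

lemma beta: "lsub (scons s LVar) t = t' \<Longrightarrow> bn_eq (LApp (LAbs t) s) t'"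
  using bn_beta[of t s] by (simp add: lsubst0)
lemma betaR: "lsub (scons s LVar) t = t' \<Longrightarrow> bn_eq t' (LApp (LAbs t) s)"
  using beta bn_sym by blast

lemma where_val: "is_val V \<Longrightarrow> bn_eq (gt R Kp (Where M V) K) (gt (scons (gval R Kp V) R) Kp M K)"
  by (simp add: gt_val, rule beta) (simp add: lsub_gt)

lemma app_vals:
  "bn_eq (LApp (LAbs (LApp (LAbs (LApp (LApp (LVar 1) (LVar 0)) (lshift 0 (lshift 0 K)))) (lshift 0 g))) w)
         (LApp (LApp w g) K)"
  by (rule bn_trans, rule beta, simp, rule beta, simp)

lemma app_vals':
  "bn_eq (LApp (LAbs (LApp (LAbs (LApp (LApp (LVar (Suc 0)) (LVar 0)) (lshift 0 (lshift 0 K)))) (lshift 0 g))) w)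
         (LApp (LApp w g) K)"
  using app_vals by simp

lemma main:
  "ccv_t M M' \<Longrightarrow> bn_eq (gt R Kp M K) (gt R Kp M' K)"
  "ccv_j J J' \<Longrightarrow> bn_eq (gj R Kp J) (gj R Kp J')"
proof (induction arbitrary: R Kp K and R Kp rule: ccv_t_ccv_j.inducts)
  case (refl_t M) then show ?case by (rule bn_refl)
next
  case (sym_t M N) then show ?case by (blast intro: bn_sym)
next
  case (trans_t M N P) then show ?case by (blast intro: bn_trans)
next
  case (refl_j J) then show ?case by (rule bn_refl)
next
  case (sym_j J J') then show ?case by (blast intro: bn_sym)
next
  case (trans_j J J' J'') then show ?case by (blast intro: bn_trans)
next
  case (lam M M') then show ?case by (simp add: bn_app bn_abs bn_refl)
next
  case (app M M' N N')
  show ?case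
    by (simp only: gt.simps gj.simps, rule bn_trans, rule app.IH(1), rule gt_Kcompat, rule bn_abs, rule app.IH(2))
next
  case (wher L L' M M')
  show ?case
    by (simp only: gt.simps gj.simps, rule bn_trans, rule wher.IH(2), rule gt_Kcompat, rule bn_abs, rule wher.IH(1))
next
  case (mu J J') then show ?case by (simp add: bn_app bn_abs bn_refl)
next
  case (jump M M' k) then show ?case by simp
next
  case (jwhere J J' M M')
  show ?case
    by (simp only: gt.simps gj.simps, rule bn_trans, rule jwhere.IH(2), rule gt_Kcompat, rule bn_abs, rule jwhere.IH(1))
next
  case (E1_t L M N) then show ?case by (simp add: gt_lift lsub_gt bn_refl)
next
  case (E1_j J M N) then show ?case by (simp add: gt_lift lsub_gt bn_refl)
next
  case (E2 J M)
  let ?X = "gt R Kp M (LAbs (gj (scons (LVar 0) (shE R)) (scons (lshift 0 K) (shE Kp)) J))"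
  have 1: "bn_eq (gt R Kp (Where (Mu J) M) K) ?X"
    by (simp, rule gt_Kcompat, rule bn_abs, rule beta) (simp add: lsub_gt)
  have 2: "bn_eq (gt R Kp (Mu (JWhere J (klift_t 0 M))) K) ?X"
    by (simp, rule beta) (simp add: lsub_gt gt_klift)
  show ?case using 1 2 by (blast intro: bn_trans bn_sym)
next
  case (E3 k L M) then show ?case by (simp add: bn_refl)
next
  case (r_nm N M)
  show ?case
    by (simp, rule gt_Kcompat, rule bn_abs, rule betaR) (simp add: lsub_gt gt_lift)
next
  case (r_vn V N)
  let ?X = "gt R Kp N (LAbs (LApp (LApp (lshift 0 (gval R Kp V)) (LVar 0)) (lshift 0 K)))"
  have 1: "bn_eq (gt R Kp (App V N) K) ?X"
    using r_vn.hyps apply (simp add: gt_val) 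
    apply (rule beta)
    apply (simp add: lsub_gt)
    done
  have 2: "bn_eq (LApp (LApp (lshift 0 (gval R Kp V)) (LVar 0)) (lshift 0 K))
     (gt (scons (LVar 0) (shE R)) (shE Kp) (App (lift_t 0 V) (Var 0)) (lshift 0 K))"
    using r_vn.hyps
    apply (simp add: gt_val gval_lift gval_shE)
    apply (rule bn_sym, rule bn_trans, rule bn_app, rule bn_abs, rule beta, simp, rule bn_refl, rule beta, simp)
    done
  have 3: "bn_eq ?X (gt R Kp (Where (App (lift_t 0 V) (Var 0)) N) K)"
    by (subst gt.simps(4), rule gt_Kcompat, rule bn_abs, rule 2)
  show ?case using 1 3 by (rule bn_trans)
next
  case (r_beta V M)
  let ?g = "gval R Kp V"
  let ?w = "LAbs (LAbs (gt (scons (LVar 1) (shE (shE R))) (shE (shE Kp)) M (LVar 0)))"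
  have 1: "bn_eq (gt R Kp (App (Lam M) V) K) (LApp (LApp ?w ?g) K)"
    using r_beta.hyps by (simp add: gt_val gval_shE app_vals app_vals')
  have 2: "bn_eq (LApp (LApp ?w ?g) K) (gt (scons ?g R) Kp M K)"
    apply (rule bn_trans, rule bn_app, rule beta, simp add: lsub_gt, rule bn_refl)
    apply (rule beta, simp add: lsub_gt)
    done
  have 3: "bn_eq (gt R Kp (Where M V) K) (gt (scons ?g R) Kp M K)"
    using r_beta.hyps by (rule where_val)
  show ?case using 1 2 3 by (blast intro: bn_trans bn_sym)
next
  case (r_subst V M)
  then show ?case using where_val[of V R Kp M K] by (simp add: gt_subst)
next
  case (r_mu M J)
  let ?X = "gj R (scons (LAbs (gt (scons (LVar 0) (shE R)) (shE Kp) M (lshift 0 K))) Kp) J"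
  have 1: "bn_eq (gt R Kp (Where M (Mu J)) K) ?X"
    by (simp, rule beta) (simp add: lsub_gt)
  have 2: "bn_eq (gt R Kp (Mu (ctx_j 0 (klift_t 0 M) J)) K) ?X"
    by (simp add: gt_ctx, rule beta) (simp add: lsub_gt gt_klift phi_def)
  show ?case using 1 2 by (blast intro: bn_trans bn_sym)
next
  case (r_ren l J)
  show ?case
    by (simp add: gt_krename, rule beta) (simp add: lsub_gt)
next
  case (r_eta V)
  let ?g = "gval R Kp V"
  have 1: "bn_eq (gt (scons (LVar 1) (shE (shE R))) (shE (shE Kp)) (App (lift_t 0 V) (Var 0)) (LVar 0))
              (LApp (LApp (lshift 0 (lshift 0 ?g)) (LVar 1)) (LVar 0))"
    using r_eta.hyps
    apply (simp add: gt_val gval_lift gval_shE)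
    apply (rule bn_trans, rule bn_app, rule bn_abs, rule beta, simp, rule bn_refl, rule beta, simp)
    done
  have 2: "bn_eq (LAbs (LApp (LApp (lshift 0 (lshift 0 ?g)) (LVar 1)) (LVar 0))) (LApp (lshift 0 ?g) (LVar 0))"
    using bn_eta[of "LApp (lshift 0 ?g) (LVar 0)"] by simp
  have 3: "bn_eq (LAbs (LApp (lshift 0 ?g) (LVar 0))) ?g" by (rule bn_eta)
  have "bn_eq (LAbs (LAbs (gt (scons (LVar 1) (shE (shE R))) (shE (shE Kp)) (App (lift_t 0 V) (Var 0)) (LVar 0)))) ?g"
    using 1 2 3 by (blast intro: bn_trans bn_abs)
  then show ?case using r_eta.hyps by (simp add: gt_val bn_app bn_refl del: gt.simps(3))
next
  case (r_where_var M)
  show ?case by (simp, rule gt_Kcompat, rule bn_eta)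
next
  case (r_mu_eta M)
  show ?case
    by (simp add: gt_klift, rule beta) (simp add: lsub_gt)
qed


lemma LV_ext: "(\<lambda>i. LVar (ext \<rho> i)) = scons (LVar 0) (shE (\<lambda>i. LVar (\<rho> i)))"
  by (auto simp: fun_eq_iff ext_def scons_def split: nat.split)
lemma LV_up: "(\<lambda>i. LVar (up \<rho> i)) = shE (\<lambda>i. LVar (\<rho> i))"
  by (auto simp: fun_eq_iff up_def)
lemma LV_up_ext: "(\<lambda>i. LVar (up (ext \<rho>) i)) = scons (LVar 1) (shE (shE (\<lambda>i. LVar (\<rho> i))))"
  by (auto simp: fun_eq_iff ext_def up_def scons_def split: nat.split)
lemma LV_upup: "(\<lambda>i. LVar (up (up \<rho>) i)) = shE (shE (\<lambda>i. LVar (\<rho> i)))"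
  by (auto simp: fun_eq_iff up_def)

lemma cps_gt:
  "(\<forall>\<rho> \<kappa> K. bn_eq (cps_t \<rho> \<kappa> M K) (gt (\<lambda>i. LVar (\<rho> i)) (\<lambda>i. LVar (\<kappa> i)) M K)) \<and>
   (\<forall>\<rho> \<kappa>. is_val M \<longrightarrow> bn_eq (vstar \<rho> \<kappa> M) (gval (\<lambda>i. LVar (\<rho> i)) (\<lambda>i. LVar (\<kappa> i)) M))"
  "\<forall>\<rho> \<kappa>. bn_eq (cps_j \<rho> \<kappa> J) (gj (\<lambda>i. LVar (\<rho> i)) (\<lambda>i. LVar (\<kappa> i)) J)"
proof (induction M and J)
  case (Var i)
  then show ?case by (simp add: bn_refl)
next
  case (Lam M)
  have "bn_eq (LAbs (LAbs (cps_t (up (ext \<rho>)) (up (up \<kappa>)) M (LVar 0))))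
     (LAbs (LAbs (gt (scons (LVar 1) (shE (shE (\<lambda>i. LVar (\<rho> i))))) (shE (shE (\<lambda>i. LVar (\<kappa> i)))) M (LVar 0))))"
    for \<rho> \<kappa>
    using Lam[THEN conjunct1, rule_format, of "up (ext \<rho>)" "up (up \<kappa>)" "LVar 0"]
    by (simp add: LV_up_ext LV_upup bn_abs)
  then show ?case by (simp add: bn_app bn_refl)
next
  case (App M N)
  have IHM: "\<And>\<rho> \<kappa> K. bn_eq (cps_t \<rho> \<kappa> M K) (gt (\<lambda>i. LVar (\<rho> i)) (\<lambda>i. LVar (\<kappa> i)) M K)"
    and IHN: "\<And>\<rho> \<kappa> K. bn_eq (cps_t \<rho> \<kappa> N K) (gt (\<lambda>i. LVar (\<rho> i)) (\<lambda>i. LVar (\<kappa> i)) N K)"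
    and VM: "\<And>\<rho> \<kappa>. is_val M \<Longrightarrow> bn_eq (vstar \<rho> \<kappa> M) (gval (\<lambda>i. LVar (\<rho> i)) (\<lambda>i. LVar (\<kappa> i)) M)"
    and VN: "\<And>\<rho> \<kappa>. is_val N \<Longrightarrow> bn_eq (vstar \<rho> \<kappa> N) (gval (\<lambda>i. LVar (\<rho> i)) (\<lambda>i. LVar (\<kappa> i)) N)"
    using App by blast+
  have "bn_eq (cps_t \<rho> \<kappa> (App M N) K) (gt (\<lambda>i. LVar (\<rho> i)) (\<lambda>i. LVar (\<kappa> i)) (App M N) K)" for \<rho> \<kappa> K
  proof -
    let ?E = "\<lambda>i. LVar (\<rho> i)" and ?F = "\<lambda>i. LVar (\<kappa> i)"
    let ?gM = "gval ?E ?F M" and ?gN = "gval ?E ?F N"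
    show ?thesis
    proof (cases "is_val M")
      case vm: True
      show ?thesis
      proof (cases "is_val N")
        case vn: True
        have 1: "bn_eq (cps_t \<rho> \<kappa> (App M N) K) (LApp (LApp ?gM ?gN) K)"
          using vm vn VM VN by (simp add: bn_app bn_refl)
        have 2: "bn_eq (gt ?E ?F (App M N) K) (LApp (LApp ?gM ?gN) K)"
          using vm vn by (simp add: gt_val gval_shE app_vals app_vals')
        show ?thesis using 1 2 by (blast intro: bn_trans bn_sym)
      next
        case vn: False
        let ?X = "gt ?E ?F N (LAbs (LApp (LApp (lshift 0 ?gM) (LVar 0)) (lshift 0 K)))"
        have 1: "bn_eq (cps_t \<rho> \<kappa> (App M N) K) ?X"
          using vm vn apply simp
          apply (rule bn_trans, rule IHN, rule gt_Kcompat)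
          apply (intro bn_abs bn_app bn_refl bn_sh VM vm)
          done
        have 2: "bn_eq (gt ?E ?F (App M N) K) ?X"
          using vm apply (simp add: gt_val)
          apply (rule beta)
          apply (simp add: lsub_gt)
          done
        show ?thesis using 1 2 by (blast intro: bn_trans bn_sym)
      qed
    next
      case vm: False
      show ?thesis
      proof (cases "is_val N")
        case vn: True
        let ?X = "gt ?E ?F M (LAbs (LApp (LApp (LVar 0) (lshift 0 ?gN)) (lshift 0 K)))"
        have 1: "bn_eq (cps_t \<rho> \<kappa> (App M N) K) ?X"
          using vm vn apply simp
          apply (rule bn_trans, rule IHM, rule gt_Kcompat)
          apply (intro bn_abs bn_app bn_refl bn_sh VN vn)
          done
        have 2: "bn_eq (gt ?E ?F (App M N) K) ?X"
          using vn apply (simp add: gt_val gval_shE)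
          apply (rule gt_Kcompat, rule bn_abs, rule beta)
          apply simp
          done
        show ?thesis using 1 2 by (blast intro: bn_trans bn_sym)
      next
        case vn: False
        show ?thesis
          using vm vn apply simp
          apply (rule bn_trans, rule IHM, rule gt_Kcompat, rule bn_abs)
          using IHN[of "up \<rho>" "up \<kappa>"] apply (simp add: LV_up)
          done
      qed
    qed
  qed
  then show ?case by simp
next
  case (Where L M)
  have IHL: "\<And>\<rho> \<kappa> K. bn_eq (cps_t \<rho> \<kappa> L K) (gt (\<lambda>i. LVar (\<rho> i)) (\<lambda>i. LVar (\<kappa> i)) L K)"
    and IHM: "\<And>\<rho> \<kappa> K. bn_eq (cps_t \<rho> \<kappa> M K) (gt (\<lambda>i. LVar (\<rho> i)) (\<lambda>i. LVar (\<kappa> i)) M K)"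
    using Where by blast+
  have "bn_eq (cps_t \<rho> \<kappa> (Where L M) K) (gt (\<lambda>i. LVar (\<rho> i)) (\<lambda>i. LVar (\<kappa> i)) (Where L M) K)" for \<rho> \<kappa> K
    apply simp
    apply (rule bn_trans, rule IHM, rule gt_Kcompat, rule bn_abs)
    using IHL[of "ext \<rho>" "up \<kappa>"] apply (simp add: LV_up LV_ext)
    done
  then show ?case by simp
next
  case (Mu J)
  have "bn_eq (cps_t \<rho> \<kappa> (Mu J) K) (gt (\<lambda>i. LVar (\<rho> i)) (\<lambda>i. LVar (\<kappa> i)) (Mu J) K)" for \<rho> \<kappa> K
    using Mu[rule_format, of "up \<rho>" "ext \<kappa>"] by (simp add: LV_up LV_ext bn_app bn_abs bn_refl)
  then show ?case by simp
next
  case (Jump k M)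
  then show ?case by simp
next
  case (JWhere J M)
  have IHJ: "\<And>\<rho> \<kappa>. bn_eq (cps_j \<rho> \<kappa> J) (gj (\<lambda>i. LVar (\<rho> i)) (\<lambda>i. LVar (\<kappa> i)) J)"
    and IHM: "\<And>\<rho> \<kappa> K. bn_eq (cps_t \<rho> \<kappa> M K) (gt (\<lambda>i. LVar (\<rho> i)) (\<lambda>i. LVar (\<kappa> i)) M K)"
    using JWhere by blast+
  have "bn_eq (cps_j \<rho> \<kappa> (JWhere J M)) (gj (\<lambda>i. LVar (\<rho> i)) (\<lambda>i. LVar (\<kappa> i)) (JWhere J M))" for \<rho> \<kappa>
    apply simp
    apply (rule bn_trans, rule IHM, rule gt_Kcompat, rule bn_abs)
    using IHJ[of "ext \<rho>" "up \<kappa>"] apply (simp add: LV_up LV_ext)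
    done
  then show ?case by simp
qed

theorem proposition1p15:
  assumes "ccv_t L M"
  shows "bn_eq (cps L) (cps M)"
proof -
  let ?\<rho> = "\<lambda>i::nat. Suc (2 * i)" and ?\<kappa> = "\<lambda>j::nat. Suc (2 * j + 1)"
  let ?E = "\<lambda>i. LVar (?\<rho> i)" and ?F = "\<lambda>i. LVar (?\<kappa> i)"
  have 1: "bn_eq (cps_t ?\<rho> ?\<kappa> L (LVar 0)) (gt ?E ?F L (LVar 0))"
    using cps_gt(1)[of L] by blast
  have 2: "bn_eq (cps_t ?\<rho> ?\<kappa> M (LVar 0)) (gt ?E ?F M (LVar 0))"
    using cps_gt(1)[of M] by blast
  have 3: "bn_eq (gt ?E ?F L (LVar 0)) (gt ?E ?F M (LVar 0))"
    using main(1)[OF assms] by blast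
  have "bn_eq (cps_t ?\<rho> ?\<kappa> L (LVar 0)) (cps_t ?\<rho> ?\<kappa> M (LVar 0))"
    using 1 2 3 by (blast intro: bn_trans bn_sym)
  then show ?thesis unfolding cps_def by (rule bn_abs)
qed

end
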